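(* Every compact topological manifold of dimension at least $2$ does not have the $\omega$-FTP property.
   Context: For continuous $f:X\to X$ and $x\in X$, $\omega_f(x)=\{y:\ \exists\, n_i\to+\infty,\ f^{n_i}(x)\to y\}$, which is totally periodic if all its points are periodic for $f$. A compact metric space $X$ has the $\omega$-FTP property if for every continuous $f:X\to X$, every totally periodic $\omega$-limit set of $f$ is finite. *)

theory Defs
  imports "HOL-Analysis.Analysis"
begin

definition omega_limit :: "('a::metric_space \<Rightarrow> 'a) \<Rightarrow> 'a \<Rightarrow> 'a set" where
  "omega_limit f x = {y. \<exists>r::nat \<Rightarrow> nat. strict_mono r \<and> ((\<lambda>i. (f ^^ (r i)) x) \<longlonglongrightarrow> y)}"

definition periodic_point :: "('a \<Rightarrow> 'a) \<Rightarrow> 'a \<Rightarrow> bool" where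
  "periodic_point f y \<longleftrightarrow> (\<exists>n>0. (f ^^ n) y = y)"

definition totally_periodic :: "('a \<Rightarrow> 'a) \<Rightarrow> 'a set \<Rightarrow> bool" where
  "totally_periodic f A \<longleftrightarrow> (\<forall>y\<in>A. periodic_point f y)"

definition omega_FTP :: "'a::metric_space set \<Rightarrow> bool" where
  "omega_FTP X \<longleftrightarrow>
     (\<forall>f. continuous_on X f \<and> f ` X \<subseteq> X \<longrightarrow>
        (\<forall>x\<in>X. totally_periodic f (omega_limit f x) \<longrightarrow> finite (omega_limit f x)))"

text \<open>X is a topological manifold (without boundary) of dimension CARD('n):
  every point has an open neighbourhood in X homeomorphic to an open subset of R^n.
  Hausdorffness is automatic in a metric space.\<close>
definition topological_manifold :: "'a::metric_space set \<Rightarrow> 'n::finite itself \<Rightarrow> bool" where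
  "topological_manifold X _ \<longleftrightarrow>
     (\<forall>x\<in>X. \<exists>U. openin (top_of_set X) U \<and> x \<in> U \<and>
        (\<exists>V::(real^'n) set. open V \<and> U homeomorphic V))"

end

theory Submission imports Defs begin
lemma subseq_from_frequent:
  fixes f :: "nat \<Rightarrow> 'a::metric_space"
  assumes H: "\<And>e N. e > 0 \<Longrightarrow> \<exists>n\<ge>N. dist (f n) l < e"
  shows "\<exists>r::nat\<Rightarrow>nat. strict_mono r \<and> (\<lambda>i. f (r i)) \<longlonglongrightarrow> l"
proof -
  define s where "s i j = (SOME n. n > j \<and> dist (f n) l < 1 / real (Suc i))" for i j
  have s: "s i j > j \<and> dist (f (s i j)) l < 1 / real (Suc i)" for i j
  proof -
    obtain n where "n \<ge> Suc j" "dist (f n) l < 1 / real (Suc i)" using H[of "1 / real (Suc i)" "Suc j"] by auto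
    then have "\<exists>n. n > j \<and> dist (f n) l < 1 / real (Suc i)" by (intro exI[of _ n]) auto
    then show ?thesis unfolding s_def by (rule someI_ex)
  qed
  define r where "r = rec_nat 0 s"
  have rS: "r (Suc i) = s i (r i)" for i by (simp add: r_def)
  have "strict_mono r" by (auto simp: strict_mono_Suc_iff rS s)
  moreover have "(\<lambda>i. f (r i)) \<longlonglongrightarrow> l"
  proof (rule metric_LIMSEQ_I)
    fix e :: real assume "e > 0"
    obtain N :: nat where N: "1 / real (Suc N) < e"
      by (metis \<open>e > 0\<close> nat_approx_posE)
    show "\<exists>no. \<forall>n\<ge>no. dist (f (r n)) l < e"
    proof (intro exI allI impI)
      fix n assume "n \<ge> Suc N"
      then obtain i where i: "n = Suc i" "i \<ge> N" by (cases n) auto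
      have "dist (f (r n)) l < 1 / real (Suc i)" using s i by (simp add: rS)
      also have "\<dots> \<le> 1 / real (Suc N)" using i by (simp add: frac_le)
      finally show "dist (f (r n)) l < e" using N by simp
    qed
  qed
  ultimately show ?thesis by blast
qed


definition mfac :: "real \<Rightarrow> real" where "mfac r = 1 / (max r (1/2) * (2 - max r (1/2)))"
definition hh :: "complex \<Rightarrow> complex" where "hh z = z * of_real (mfac (norm z)) * cis (1 - norm z)"
definition rr :: "nat \<Rightarrow> real" where "rr n = (real n + 1) / (real n + 2)"
definition th :: "nat \<Rightarrow> real" where "th n = (\<Sum>k<n. 1 / (real k + 2))"

lemma rr_bounds: "1/2 \<le> rr n" "rr n < 1" "1 - rr n = 1 / (real n + 2)"
  by (auto simp: rr_def field_simps)

lemma orbit: "(hh ^^ n) (1/2) = of_real (rr n) * cis (th n)"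
proof (induction n)
  case 0 then show ?case by (simp add: rr_def th_def)
next
  case (Suc n)
  have pos: "rr n > 0" using rr_bounds(1)[of n] by linarith
  have nz: "norm (of_real (rr n) * cis (th n)) = rr n" using pos by (simp add: norm_mult)
  have mx: "max (rr n) (1/2) = rr n" using rr_bounds(1)[of n] by simp
  have d: "2 - rr n = (real n + 3)/(real n + 2)" by (simp add: rr_def field_simps)
  have e1: "rr n * (1 / (rr n * (2 - rr n))) = rr (Suc n)"
  proof -
    have "rr n * (1 / (rr n * (2 - rr n))) = 1 / (2 - rr n)" using pos by simp
    also have "\<dots> = (real n + 2)/(real n + 3)" unfolding d by simp
    also have "\<dots> = rr (Suc n)" by (simp add: rr_def add.commute)
    finally show ?thesis .
  qed
  have e2: "th n + (1 - rr n) = th (Suc n)" by (simp add: th_def rr_bounds(3))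
  have "(hh ^^ Suc n) (1/2) = hh (of_real (rr n) * cis (th n))" using Suc by simp
  also have "\<dots> = of_real (rr n * (1 / (rr n * (2 - rr n)))) * (cis (th n) * cis (1 - rr n))"
    unfolding hh_def nz mfac_def mx by (simp add: algebra_simps)
  also have "\<dots> = of_real (rr (Suc n)) * cis (th (Suc n))"
    by (simp only: e1 cis_mult e2)
  finally show ?case .
qed

lemma th_at_top: "filterlim th at_top sequentially"
proof -
  have "th n = harm (Suc n) - 1" for n
  proof (induction n)
    case 0 then show ?case by (simp add: th_def harm_def)
  next
    case (Suc n)
    then show ?case by (simp add: th_def harm_Suc add.commute inverse_eq_divide)
  qed
  then have "th = (\<lambda>n. (-1) + harm (Suc n))" by auto
  moreover have "filterlim (\<lambda>n. (-1) + harm (Suc n) :: real) at_top sequentially"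
    by (rule filterlim_tendsto_add_at_top[OF tendsto_const]) (simp add: filterlim_sequentially_Suc harm_at_top)
  ultimately show ?thesis by simp
qed


lemma th_mono: "m \<le> n \<Longrightarrow> th m \<le> th n"
  unfolding th_def by (rule sum_mono2) auto

lemma th_Suc: "th (Suc n) = th n + 1 / (real n + 2)"
  by (simp add: th_def)

lemma mfac_pos: "mfac r > 0" if "r \<le> 1"
  using that unfolding mfac_def by (auto simp: max_def)

lemma hh_fix: "norm y = 1 \<Longrightarrow> hh y = y"
  by (simp add: hh_def mfac_def)

lemma hh_cont: "continuous_on (cball 0 1) hh"
proof -
  have "continuous_on (cball 0 1) (\<lambda>z::complex. max (norm z) (1/2) * (2 - max (norm z) (1/2)))"
    by (intro continuous_intros)
  moreover have "\<forall>z\<in>cball (0::complex) 1. max (norm z) (1/2) * (2 - max (norm z) (1/2)) \<noteq> 0"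
    by (auto simp: max_def)
  ultimately have "continuous_on (cball 0 1) (\<lambda>z::complex. mfac (norm z))"
    unfolding mfac_def by (intro continuous_on_divide continuous_on_const) auto
  moreover have "continuous_on (cball 0 1) (\<lambda>z::complex. cis (1 - norm z))"
    unfolding cis_conv_exp by (intro continuous_intros)
  ultimately show ?thesis unfolding hh_def
    by (intro continuous_on_mult continuous_on_id continuous_on_of_real) auto
qed

lemma hh_maps: "z \<in> cball 0 1 \<Longrightarrow> hh z \<in> cball 0 1"
proof -
  assume z: "z \<in> cball 0 1"
  then have r: "norm z \<le> 1" by simp
  have "norm (hh z) = norm z * mfac (norm z)"
    using mfac_pos[OF r] by (simp add: hh_def norm_mult)
  also have "\<dots> \<le> 1"
  proof (cases "norm z \<ge> 1/2")
    case True
    then have "max (norm z) (1/2) = norm z" by simp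
    moreover have "z \<noteq> 0" using True by auto
    ultimately have "norm z * mfac (norm z) = 1 / (2 - norm z)" unfolding mfac_def using True by simp
    then show ?thesis using r by simp
  next
    case False
    then have "max (norm z) (1/2) = 1/2" by simp
    then have "norm z * mfac (norm z) = norm z * (4/3)" unfolding mfac_def by simp
    then show ?thesis using False by linarith
  qed
  finally show ?thesis by simp
qed

lemma orbit_norm: "norm ((hh ^^ n) (1/2)) = rr n"
  using rr_bounds(1)[of n] by (simp add: orbit norm_mult)

lemma rr_lim: "rr \<longlonglongrightarrow> 1"
proof -
  have "(\<lambda>n. 1 - 1 / (real n + 2)) \<longlonglongrightarrow> 1 - 0"
  proof (intro tendsto_intros)
    have "(\<lambda>n. inverse (real (Suc (Suc n)))) \<longlonglongrightarrow> 0"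
      by (rule LIMSEQ_Suc[OF LIMSEQ_inverse_real_of_nat])
    then show "(\<lambda>n. 1 / (real n + 2)) \<longlonglongrightarrow> 0" by (simp add: inverse_eq_divide add.commute)
  qed
  moreover have "rr = (\<lambda>n. 1 - 1 / (real n + 2))"
    using rr_bounds(3) by (auto simp: fun_eq_iff algebra_simps)
  ultimately show ?thesis by simp
qed

lemma omega_norm: "y \<in> omega_limit hh (1/2) \<Longrightarrow> norm y = 1"
proof -
  assume "y \<in> omega_limit hh (1/2)"
  then obtain r where r: "strict_mono r" "(\<lambda>i. (hh ^^ r i) (1/2)) \<longlonglongrightarrow> y"
    unfolding omega_limit_def by auto
  have "(\<lambda>i. norm ((hh ^^ r i) (1/2))) \<longlonglongrightarrow> norm y" using r(2) by (rule tendsto_norm)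
  moreover have "(\<lambda>i. norm ((hh ^^ r i) (1/2))) \<longlonglongrightarrow> 1"
    unfolding orbit_norm using LIMSEQ_subseq_LIMSEQ[OF rr_lim r(1)] by (simp add: comp_def)
  ultimately show ?thesis using LIMSEQ_unique by blast
qed

lemma omega_dense: "cis a \<in> omega_limit hh (1/2)"
proof -
  have "\<exists>n\<ge>N. dist ((hh ^^ n) (1/2)) (cis a) < e" if e: "e > 0" for e N
  proof -
    have "isCont cis a" unfolding cis_conv_exp by (intro continuous_intros)
    then obtain d where d: "d > 0" "\<And>t. dist t a < d \<Longrightarrow> dist (cis t) (cis a) < e/2"
      unfolding continuous_at_eps_delta using e by (meson half_gt_zero)
    obtain M0 :: nat where M0: "1 / real (Suc M0) < min d (e/2)"
      using nat_approx_posE[of "min d (e/2)"] d e by auto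
    define M where "M = max N M0"
    have M: "1 / (real M + 2) < min d (e/2)"
    proof -
      have "1 / (real M + 2) \<le> 1 / real (Suc M0)" unfolding M_def by (simp add: frac_le)
      then show ?thesis using M0 by linarith
    qed
    define k :: int where "k = ceiling ((th M - a) / (2*pi)) + 1"
    define T where "T = a + 2*pi*k"
    have "(th M - a) / (2*pi) < k" unfolding k_def by linarith
    then have TM: "th M < T" unfolding T_def by (simp add: field_simps)
    have "eventually (\<lambda>n. T \<le> th n) sequentially"
      using th_at_top by (simp add: filterlim_at_top)
    then obtain n1 where "T \<le> th n1" by (auto simp: eventually_sequentially)
    define n0 where "n0 = (LEAST n. T \<le> th n)"
    have n0: "T \<le> th n0" unfolding n0_def by (rule LeastI) fact
    have "n0 > M"
    proof (rule ccontr)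
      assume "\<not> n0 > M"
      then have "th n0 \<le> th M" by (intro th_mono) simp
      then show False using n0 TM by simp
    qed
    then obtain p where p: "n0 = Suc p" "p \<ge> M" by (cases n0) auto
    have "th p < T" using not_less_Least[of p "\<lambda>n. T \<le> th n"] p unfolding n0_def by auto
    then have tb: "th n0 - T < 1 / (real p + 2)" using p by (simp add: th_Suc)
    have "1 / (real p + 2) \<le> 1 / (real M + 2)" using p by (simp add: frac_le)
    then have tb2: "\<bar>th n0 - T\<bar> < min d (e/2)" using tb n0 M by linarith
    have "cis (th n0) = cis ((th n0 - T) + a) * cis (2 * pi * of_int k)"
      by (simp add: cis_mult T_def algebra_simps)
    also have "\<dots> = cis ((th n0 - T) + a)" by simp
    finally have c1: "cis (th n0) = cis ((th n0 - T) + a)" .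
    have "dist (cis (th n0)) (cis a) < e/2" unfolding c1
      by (rule d(2)) (use tb2 in \<open>simp add: dist_real_def\<close>)
    moreover have "dist ((hh ^^ n0) (1/2)) (cis (th n0)) = 1 - rr n0"
    proof -
      have "(hh ^^ n0) (1/2) - cis (th n0) = of_real (rr n0 - 1) * cis (th n0)"
        by (simp add: orbit algebra_simps)
      moreover have "norm (of_real (rr n0) - 1 :: complex) = \<bar>rr n0 - 1\<bar>"
        by (metis norm_of_real of_real_1 of_real_diff)
      ultimately show ?thesis using rr_bounds(2)[of n0] by (simp add: dist_norm norm_mult)
    qed
    moreover have "1 - rr n0 < e/2"
    proof -
      have "1 - rr n0 = 1 / (real n0 + 2)" by (rule rr_bounds(3))
      also have "\<dots> \<le> 1 / (real M + 2)" using \<open>n0 > M\<close> by (simp add: frac_le)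
      finally show ?thesis using M by linarith
    qed
    ultimately have "dist ((hh ^^ n0) (1/2)) (cis a) < e"
      using dist_triangle[of "(hh ^^ n0) (1/2)" "cis a" "cis (th n0)"] by linarith
    then show ?thesis using \<open>n0 > M\<close> unfolding M_def by (intro exI[of _ n0]) auto
  qed
  then obtain r :: "nat \<Rightarrow> nat" where "strict_mono r" "(\<lambda>i. (hh ^^ r i) (1/2)) \<longlonglongrightarrow> cis a"
    using subseq_from_frequent[of "\<lambda>n. (hh ^^ n) (1/2)" "cis a"] by blast
  then show ?thesis unfolding omega_limit_def by blast
qed


lemma cis_inj: "inj_on cis {0..pi}"
proof (rule inj_onI)
  fix a b assume ab: "a \<in> {0..pi}" "b \<in> {0..pi}" and e: "cis a = cis b"
  have "cos a = Re (cis a)" by (simp only: cis.sel)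
  also have "\<dots> = Re (cis b)" by (simp only: e)
  also have "\<dots> = cos b" by (simp only: cis.sel)
  finally have "cos a = cos b" .
  moreover have "0 \<le> a" "a \<le> pi" "0 \<le> b" "b \<le> pi" using ab by auto
  ultimately show "a = b" using cos_inj_pi by blast
qed

lemma orbit_in: "(hh ^^ n) (1/2) \<in> cball 0 1"
  using orbit_norm[of n] rr_bounds(2)[of n] by simp

lemma transport:
  fixes X :: "'a::metric_space set" and e :: "complex \<Rightarrow> 'a" and \<psi> :: "'a \<Rightarrow> complex"
  assumes ce: "continuous_on (cball 0 1) e" and ie: "inj_on e (cball 0 1)"
    and eX: "e ` cball 0 1 \<subseteq> X"
    and cp: "continuous_on X \<psi>" and pX: "\<psi> ` X \<subseteq> cball 0 1"
    and pe: "\<And>z. z \<in> cball 0 1 \<Longrightarrow> \<psi> (e z) = z"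
  shows "\<not> omega_FTP X"
proof -
  define f where "f w = e (hh (\<psi> w))" for w
  have cf: "continuous_on X f"
  proof -
    have "continuous_on X (hh \<circ> \<psi>)"
      by (rule continuous_on_compose[OF cp continuous_on_subset[OF hh_cont pX]])
    moreover have "(hh \<circ> \<psi>) ` X \<subseteq> cball 0 1" using pX hh_maps by auto
    ultimately have "continuous_on X (e \<circ> (hh \<circ> \<psi>))"
      by (intro continuous_on_compose[of X "hh \<circ> \<psi>" e] continuous_on_subset[OF ce])
    then show ?thesis unfolding f_def comp_def by simp
  qed
  have fX: "f ` X \<subseteq> X"
  proof
    fix v assume "v \<in> f ` X"
    then obtain w where w: "w \<in> X" "v = f w" by auto
    have "\<psi> w \<in> cball 0 1" using pX w(1) by auto
    then have "hh (\<psi> w) \<in> cball 0 1" by (rule hh_maps)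
    then show "v \<in> X" using eX w(2) unfolding f_def by auto
  qed
  have fe: "f (e z) = e (hh z)" if "z \<in> cball 0 1" for z
    using pe[OF that] unfolding f_def by simp
  define x where "x = e (1/2)"
  have hc: "(1/2::complex) \<in> cball 0 1" by simp
  have xX: "x \<in> X" using eX hc unfolding x_def by blast
  have orb: "(f ^^ n) x = e ((hh ^^ n) (1/2))" for n
  proof (induction n)
    case 0 then show ?case by (simp add: x_def)
  next
    case (Suc n) then show ?case using fe[OF orbit_in[of n]] by simp
  qed
  have etend: "(\<lambda>i. e (u i)) \<longlonglongrightarrow> e l" if "\<And>i. u i \<in> cball 0 1" "l \<in> cball 0 1" "u \<longlonglongrightarrow> l" for u l
    by (rule continuous_on_tendsto_compose[OF ce that(3,2)]) (use that(1) in auto)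
  have sub: "e ` cis ` {0..pi} \<subseteq> omega_limit f x"
  proof
    fix y assume "y \<in> e ` cis ` {0..pi}"
    then obtain a where y: "y = e (cis a)" by auto
    obtain r where r: "strict_mono r" "(\<lambda>i. (hh ^^ r i) (1/2)) \<longlonglongrightarrow> cis a"
      using omega_dense[of a] unfolding omega_limit_def by auto
    have "(\<lambda>i. e ((hh ^^ r i) (1/2))) \<longlonglongrightarrow> e (cis a)"
      by (rule etend[OF orbit_in]) (use r in auto)
    then have "(\<lambda>i. (f ^^ r i) x) \<longlonglongrightarrow> y" by (simp add: orb y)
    then show "y \<in> omega_limit f x" unfolding omega_limit_def using r(1) by blast
  qed
  have inf: "infinite (omega_limit f x)"
  proof
    assume "finite (omega_limit f x)"
    then have "finite (e ` cis ` {0..pi})" using sub finite_subset by blast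
    moreover have "inj_on e (cis ` {0..pi})" using ie by (rule inj_on_subset) auto
    ultimately have "finite (cis ` {0..pi})" using finite_imageD by blast
    then have "finite {0..pi}" using cis_inj finite_imageD by blast
    then show False using infinite_Icc[of 0 pi] pi_gt_zero by blast
  qed
  have tp: "totally_periodic f (omega_limit f x)"
    unfolding totally_periodic_def periodic_point_def
  proof
    fix y assume "y \<in> omega_limit f x"
    then obtain r where r: "strict_mono r" "(\<lambda>i. (f ^^ r i) x) \<longlonglongrightarrow> y"
      unfolding omega_limit_def by auto
    have "seq_compact (cball (0::complex) 1)" by (intro compact_imp_seq_compact compact_cball)
    then obtain l s where ls: "l \<in> cball 0 1" "strict_mono s"
      "((\<lambda>i. (hh ^^ r i) (1/2)) \<circ> s) \<longlonglongrightarrow> l"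
      using seq_compactE[of "cball 0 1" "\<lambda>i. (hh ^^ r i) (1/2)"] orbit_in by metis
    have "strict_mono (r \<circ> s)" using r(1) ls(2) by (rule strict_mono_o)
    then have "l \<in> omega_limit hh (1/2)" unfolding omega_limit_def mem_Collect_eq
      by (intro exI[of _ "r \<circ> s"] conjI) (use ls(3) in \<open>simp_all add: comp_def\<close>)
    then have nl: "norm l = 1" by (rule omega_norm)
    have "(\<lambda>i. e ((hh ^^ r (s i)) (1/2))) \<longlonglongrightarrow> e l"
      by (rule etend[OF orbit_in ls(1)]) (use ls(3) in \<open>simp add: comp_def\<close>)
    moreover have "(\<lambda>i. e ((hh ^^ r (s i)) (1/2))) \<longlonglongrightarrow> y"
      using LIMSEQ_subseq_LIMSEQ[OF r(2) ls(2)] by (simp add: comp_def orb)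
    ultimately have "y = e l" using LIMSEQ_unique by blast
    then have "f y = y" using fe[OF ls(1)] hh_fix[OF nl] by simp
    then show "\<exists>n>0. (f ^^ n) y = y" by (intro exI[of _ 1]) simp
  qed
  show ?thesis
  proof
    assume H: "omega_FTP X"
    have "finite (omega_limit f x)"
      using H[unfolded omega_FTP_def, rule_format, OF conjI[OF cf fX] xX tp] .
    then show False using inf by simp
  qed
qed


theorem corollary1p6:
  fixes X :: "'a::metric_space set"
  assumes "compact X" and "X \<noteq> {}"
    and "topological_manifold X TYPE('n::finite)"
    and "CARD('n) \<ge> 2"
  shows "\<not> omega_FTP X"
proof -
  obtain x0 where x0: "x0 \<in> X" using assms(2) by auto
  obtain U and V :: "(real^'n) set" where UV: "openin (top_of_set X) U" "x0 \<in> U" "open V" "U homeomorphic V"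
    using assms(3) x0 unfolding topological_manifold_def by blast
  obtain g k where hom: "homeomorphism U V g k" using UV(4) unfolding homeomorphic_def by blast
  have gU: "g ` U = V" and kV: "k ` V = U" and cg: "continuous_on U g" and ck: "continuous_on V k"
    and kg: "\<And>x. x \<in> U \<Longrightarrow> k (g x) = x" and gk: "\<And>y. y \<in> V \<Longrightarrow> g (k y) = y"
    using hom unfolding homeomorphism_def by auto
  have UX: "U \<subseteq> X" using UV(1) by (rule openin_imp_subset)
  define p where "p = g x0"
  have pV: "p \<in> V" using gU UV(2) unfolding p_def by blast
  obtain \<delta> where \<delta>: "\<delta> > 0" "ball p \<delta> \<subseteq> V" using UV(3) pV open_contains_ball by blast
  obtain i j :: 'n where ij: "i \<noteq> j"
  proof -
    have "\<exists>i j::'n. i \<noteq> j"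
    proof (rule ccontr)
      assume "\<not> (\<exists>i j::'n. i \<noteq> j)"
      then have "(UNIV :: 'n set) = {undefined}" by auto
      then have "card (UNIV :: 'n set) = card {undefined :: 'n}" by (rule arg_cong)
      then have "CARD('n) = 1" by simp
      then show False using assms(4) by simp
    qed
    then show ?thesis using that by blast
  qed
  define E where "E z = p + (\<delta>/4) *\<^sub>R (Re z *\<^sub>R axis i (1::real) + Im z *\<^sub>R axis j 1)" for z :: complex
  have cE: "continuous_on (cball 0 1) E" unfolding E_def by (intro continuous_intros)
  have Ein: "E z \<in> V" if "z \<in> cball 0 1" for z
  proof -
    have nz: "norm z \<le> 1" using that by simp
    have "norm (Re z *\<^sub>R axis i (1::real) + Im z *\<^sub>R axis j 1) \<le> norm (Re z *\<^sub>R axis i (1::real)) + norm (Im z *\<^sub>R axis j (1::real))"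
      by (rule norm_triangle_ineq)
    also have "\<dots> = \<bar>Re z\<bar> + \<bar>Im z\<bar>" by simp
    also have "\<dots> \<le> 2" using abs_Re_le_cmod[of z] abs_Im_le_cmod[of z] nz by linarith
    finally have n2: "norm (Re z *\<^sub>R axis i (1::real) + Im z *\<^sub>R axis j 1) \<le> 2" .
    have "dist p (E z) = (\<delta>/4) * norm (Re z *\<^sub>R axis i (1::real) + Im z *\<^sub>R axis j 1)"
      unfolding E_def dist_norm using \<delta>(1) by simp
    also have "\<dots> \<le> (\<delta>/4) * 2" using n2 \<delta>(1) by (intro mult_left_mono) auto
    also have "\<dots> < \<delta>" using \<delta>(1) by simp
    finally show ?thesis using \<delta>(2) by auto
  qed
  have Ei: "(E z) $ i = p $ i + (\<delta>/4) * Re z" for z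
    using ij by (simp add: E_def axis_def)
  have Ej: "(E z) $ j = p $ j + (\<delta>/4) * Im z" for z
    using ij by (simp add: E_def axis_def)
  have Einj: "z = w" if "E z = E w" for z w
  proof -
    have "Re z = Re w" using Ei[of z] Ei[of w] that \<delta>(1) by simp
    moreover have "Im z = Im w" using Ej[of z] Ej[of w] that \<delta>(1) by simp
    ultimately show ?thesis by (rule complex_eqI)
  qed
  define e where "e z = k (E z)" for z
  have EV: "E ` cball 0 1 \<subseteq> V" using Ein by auto
  have ce: "continuous_on (cball 0 1) e"
  proof -
    have "continuous_on (cball 0 1) (k \<circ> E)"
      by (rule continuous_on_compose[OF cE continuous_on_subset[OF ck EV]])
    then show ?thesis unfolding e_def comp_def by simp
  qed
  have ie: "inj_on e (cball 0 1)"
  proof (rule inj_onI)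
    fix z w assume zw: "z \<in> cball 0 1" "w \<in> cball 0 1" "e z = e w"
    then have "g (k (E z)) = g (k (E w))" unfolding e_def by simp
    then have "E z = E w" using gk Ein zw by simp
    then show "z = w" by (rule Einj)
  qed
  have eX: "e ` cball 0 1 \<subseteq> X" using EV kV UX unfolding e_def by blast
  define K where "K = e ` cball 0 1"
  have cK: "compact K" unfolding K_def by (rule compact_continuous_image[OF ce compact_cball])
  obtain ei where hei: "homeomorphism (cball 0 1) K e ei"
    using homeomorphism_compact[OF compact_cball ce K_def[symmetric] ie] by blast
  have cei: "continuous_on K ei" and eie: "\<And>z. z \<in> cball 0 1 \<Longrightarrow> ei (e z) = z"
    using hei unfolding homeomorphism_def by auto
  have KX: "K \<subseteq> X" using eX unfolding K_def .
  have nsX: "normal_space (top_of_set X)"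
    by (rule metrizable_imp_normal_space[OF metrizable_space_subtopology[OF metrizable_space_euclidean]])
  have clK: "closedin (top_of_set X) K" by (rule closed_subset[OF KX compact_imp_closed[OF cK]])
  have subK: "subtopology (top_of_set X) K = top_of_set K"
    using KX by (simp add: subtopology_subtopology Int_absorb1)
  have cRe: "continuous_map (subtopology (top_of_set X) K) euclideanreal (\<lambda>w. Re (ei w))"
    unfolding subK continuous_map_iff_continuous by (intro continuous_intros cei)
  have cIm: "continuous_map (subtopology (top_of_set X) K) euclideanreal (\<lambda>w. Im (ei w))"
    unfolding subK continuous_map_iff_continuous by (intro continuous_intros cei)
  obtain g1 where g1: "continuous_map (top_of_set X) euclideanreal g1" "\<And>w. w \<in> K \<Longrightarrow> g1 w = Re (ei w)"
    using Tietze_extension_realinterval[OF nsX clK is_interval_univ UNIV_not_empty cRe] by auto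
  obtain g2 where g2: "continuous_map (top_of_set X) euclideanreal g2" "\<And>w. w \<in> K \<Longrightarrow> g2 w = Im (ei w)"
    using Tietze_extension_realinterval[OF nsX clK is_interval_univ UNIV_not_empty cIm] by auto
  define c where "c w = of_real (g1 w) + \<i> * of_real (g2 w)" for w
  define \<psi> where "\<psi> w = c w / of_real (max 1 (norm (c w)))" for w
  have cc: "continuous_on X c" unfolding c_def
    using g1(1) g2(1) unfolding continuous_map_iff_continuous by (intro continuous_intros) auto
  have cp: "continuous_on X \<psi>" unfolding \<psi>_def
    by (intro continuous_intros cc) auto
  have pX: "\<psi> ` X \<subseteq> cball 0 1"
  proof
    fix v assume "v \<in> \<psi> ` X"
    then obtain w where v: "v = \<psi> w" by auto
    have "norm v = norm (c w) / max 1 (norm (c w))" unfolding v \<psi>_def by (simp add: norm_divide)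
    also have "\<dots> \<le> 1" by simp
    finally show "v \<in> cball 0 1" by simp
  qed
  have pe: "\<psi> (e z) = z" if "z \<in> cball 0 1" for z
  proof -
    have eK: "e z \<in> K" using that unfolding K_def by blast
    have "c (e z) = z" unfolding c_def using g1(2)[OF eK] g2(2)[OF eK] eie[OF that]
      by (simp add: complex_eq_iff)
    moreover have "norm z \<le> 1" using that by simp
    ultimately show ?thesis unfolding \<psi>_def by (simp add: max_def)
  qed
  show ?thesis by (rule transport[OF ce ie eX cp pX pe])
qed

end
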